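(* Let $d>0$, let $\mathcal{S}$ be the 4-PAM constellation, and let $\mathcal{B}\subset\{0,1\}^{2N}$ be a binary linear code with at least two codewords. (i) If $\mathcal{S}$ is labeled by $\boldsymbol{q}=[0,1,3,2]$ and $\mathcal{B}$ contains a codeword $\boldsymbol{b}''$ with $b''_2[k]=1$ for all $k=1,\dots,N$, then $\mathsf{L}(\mathcal{B})=0$. (ii) If $\mathcal{S}$ is labeled by $\boldsymbol{q}=[0,2,3,1]$ and $\mathcal{B}$ contains a codeword $\boldsymbol{b}''$ with $b''_1[k]=1$ for all $k=1,\dots,N$, then $\mathsf{L}(\mathcal{B})=0$.
   Context: $\mathcal{S}=\{s_1,s_2,s_3,s_4\}$ with $s_1=-3d$, $s_2=-d$, $s_3=d$, $s_4=3d$. A labeling is a bijection $\Phi_{\mathcal{S}}:\{0,1\}^2\to\mathcal{S}$, described by $\boldsymbol{q}=[q_1,\dots,q_4]$ where $q_i$ is the integer whose two-bit representation $[b_1,b_2]$ (most significant bit $b_1$ first) is $\Phi_{\mathcal{S}}^{-1}(s_i)$. A codeword of $\mathcal{B}$ is written $\boldsymbol{b}=[\boldsymbol{b}[1],\dots,\boldsymbol{b}[N]]$ with $\boldsymbol{b}[k]=[b_1[k],b_2[k]]$, and the CM code is $\mathcal{X}=\{[\Phi_{\mathcal{S}}(\boldsymbol{b}[1]),\dots,\Phi_{\mathcal{S}}(\boldsymbol{b}[N])]:\boldsymbol{b}\in\mathcal{B}\}$. For $\boldsymbol{x},\hat{\boldsymbol{x}}\in\mathcal{S}^N$ and each $k$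 with $x[k]\neq\hat{x}[k]$: $\mu^{\mathcal{X}}_k=\sigma^{2,\mathcal{X}}_k=(x[k]-\hat{x}[k])^2/(4d^2)$; $\mu^{\mathcal{B}}_k=\sigma^{2,\mathcal{B}}_k=(x[k]-\hat{x}[k])^2/(4d^2)$ except that if $\{x[k],\hat{x}[k]\}=\{s_1,s_4\}$ then $\mu^{\mathcal{B}}_k=3$, $\sigma^{2,\mathcal{B}}_k=1$. Summing over $k$ with $x[k]\neq\hat{x}[k]$, $a^{\mathcal{X}}(\boldsymbol{x},\hat{\boldsymbol{x}})=\sum_k\mu^{\mathcal{X}}_k/\sqrt{\sum_k\sigma^{2,\mathcal{X}}_k}$ and $a^{\mathcal{B}}(\boldsymbol{x},\hat{\boldsymbol{x}})=\sum_k\mu^{\mathcal{B}}_k/\sqrt{\sum_k\sigma^{2,\mathcal{B}}_k}$ (normalized distances of the symbol-wise ML decoder and of the bit-wise max-log decoder under the zero-crossing approximation). The asymptotic loss of the code is $\mathsf{L}(\mathcal{B})=20\log_{10}\Big(\min_{\boldsymbol{x}\neq\hat{\boldsymbol{x}}\in\mathcal{X}}a^{\mathcal{X}}(\boldsymbol{x},\hat{\boldsymbol{x}})\big/\min_{\boldsymbol{x}\neq\hat{\boldsymbol{x}}\in\mathcal{X}}a^{\mathcal{B}}(\boldsymbol{x},\hat{\boldsymbol{x}})\Big)$ dB. *)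

theory Defs
  imports Complex_Main
begin

text \<open>4-PAM constellation: s_{i+1} = pam d i for i = 0..3, i.e. -3d, -d, d, 3d.\<close>
definition pam :: "real \<Rightarrow> nat \<Rightarrow> real" where
  "pam d i = (2 * real i - 3) * d"

definition bits_val :: "bool \<times> bool \<Rightarrow> nat" where
  "bits_val bb = (if fst bb then 2 else 0) + (if snd bb then 1 else 0)"

text \<open>Labeling Phi_S described by q = [q_1,..,q_4] (0-indexed list): Phi(bb) = s_i
  where q_i is the integer with binary representation bb.\<close>
definition labeling :: "nat list \<Rightarrow> real \<Rightarrow> bool \<times> bool \<Rightarrow> real" where
  "labeling q d bb = pam d (THE i. i < 4 \<and> q ! i = bits_val bb)"

text \<open>Codewords: lists of length N of bit pairs b[k] = (b_1[k], b_2[k]).\<close>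
definition xor_word :: "(bool \<times> bool) list \<Rightarrow> (bool \<times> bool) list \<Rightarrow> (bool \<times> bool) list" where
  "xor_word b c = map2 (\<lambda>(a1, a2) (c1, c2). (a1 \<noteq> c1, a2 \<noteq> c2)) b c"

definition binary_linear_code :: "nat \<Rightarrow> (bool \<times> bool) list set \<Rightarrow> bool" where
  "binary_linear_code N B \<longleftrightarrow>
     B \<subseteq> {b. length b = N} \<and> replicate N (False, False) \<in> B \<and>
     (\<forall>b\<in>B. \<forall>c\<in>B. xor_word b c \<in> B)"

definition cm_code :: "nat list \<Rightarrow> real \<Rightarrow> (bool \<times> bool) list set \<Rightarrow> real list set" where
  "cm_code q d B = map (labeling q d) ` B"

definition diff_idx :: "real list \<Rightarrow> real list \<Rightarrow> nat set" where
  "diff_idx x y = {k. k < length x \<and> x ! k \<noteq> y ! k}"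

definition mu_X :: "real \<Rightarrow> real \<Rightarrow> real \<Rightarrow> real" where
  "mu_X d u v = (u - v)^2 / (4 * d^2)"

definition sigma2_X :: "real \<Rightarrow> real \<Rightarrow> real \<Rightarrow> real" where
  "sigma2_X d u v = (u - v)^2 / (4 * d^2)"

definition mu_B :: "real \<Rightarrow> real \<Rightarrow> real \<Rightarrow> real" where
  "mu_B d u v = (if {u, v} = {pam d 0, pam d 3} then 3 else (u - v)^2 / (4 * d^2))"

definition sigma2_B :: "real \<Rightarrow> real \<Rightarrow> real \<Rightarrow> real" where
  "sigma2_B d u v = (if {u, v} = {pam d 0, pam d 3} then 1 else (u - v)^2 / (4 * d^2))"

definition a_X :: "real \<Rightarrow> real list \<Rightarrow> real list \<Rightarrow> real" where
  "a_X d x y = (\<Sum>k\<in>diff_idx x y. mu_X d (x ! k) (y ! k))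
              / sqrt (\<Sum>k\<in>diff_idx x y. sigma2_X d (x ! k) (y ! k))"

definition a_B :: "real \<Rightarrow> real list \<Rightarrow> real list \<Rightarrow> real" where
  "a_B d x y = (\<Sum>k\<in>diff_idx x y. mu_B d (x ! k) (y ! k))
              / sqrt (\<Sum>k\<in>diff_idx x y. sigma2_B d (x ! k) (y ! k))"

definition asym_loss :: "real \<Rightarrow> nat list \<Rightarrow> (bool \<times> bool) list set \<Rightarrow> real" where
  "asym_loss d q B =
     (let X = cm_code q d B in
      20 * log 10 (Min {a_X d x y | x y. x \<in> X \<and> y \<in> X \<and> x \<noteq> y}
                 / Min {a_B d x y | x y. x \<in> X \<and> y \<in> X \<and> x \<noteq> y}))"

end

theory Submission
  imports Defs
begin

definition xorp :: "bool \<times> bool \<Rightarrow> bool \<times> bool \<Rightarrow> bool \<times> bool" where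
  "xorp a c = (fst a \<noteq> fst c, snd a \<noteq> snd c)"

definition wt :: "bool \<times> bool \<Rightarrow> real" where
  "wt e = (if e = (False, False) then 0 else if e = (True, True) then 4 else 1)"

definition ind :: "real \<Rightarrow> real \<Rightarrow> real \<Rightarrow> real" where
  "ind d u v = (if {u, v} = {pam d 0, pam d 3} then 1 else 0)"

lemma special_diff:
  assumes "d > 0" "{u, v} = {pam d 0, pam d 3}"
  shows "(u - v)^2 / (4 * d^2) = 9"
proof -
  from assms(2) have "(u = pam d 0 \<and> v = pam d 3) \<or> (u = pam d 3 \<and> v = pam d 0)"
    by (auto simp: doubleton_eq_iff)
  hence "(u - v)^2 = 36 * d^2" by (auto simp: pam_def power2_eq_square algebra_simps)
  thus ?thesis using assms(1) by simp
qed

lemma term_facts: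
  assumes "d > 0"
  shows "mu_X d u v = sigma2_B d u v + 8 * ind d u v"
    and "mu_B d u v = sigma2_B d u v + 2 * ind d u v"
    and "ind d u v \<le> sigma2_B d u v"
    and "0 \<le> ind d u v"
    and "0 \<le> sigma2_B d u v"
  using special_diff[OF assms, of u v]
  by (auto simp: mu_X_def mu_B_def sigma2_B_def ind_def)

lemma diff_sub: "diff_idx x y \<subseteq> {..<length x}" "finite (diff_idx x y)"
  unfolding diff_idx_def by auto

lemma aX_eq: "a_X d x y = sqrt (\<Sum>k\<in>diff_idx x y. mu_X d (x ! k) (y ! k))"
proof -
  let ?s = "\<Sum>k\<in>diff_idx x y. mu_X d (x ! k) (y ! k)"
  have "?s \<ge> 0" by (intro sum_nonneg) (simp add: mu_X_def)
  moreover have "s \<ge> 0 \<Longrightarrow> s / sqrt s = sqrt s" for s :: real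
    by (cases "s = 0") (auto simp: real_div_sqrt)
  ultimately show ?thesis unfolding a_X_def sigma2_X_def mu_X_def by simp
qed

lemma aB_le_aX:
  assumes "d > 0"
  shows "a_B d x y \<le> a_X d x y"
proof -
  let ?I = "diff_idx x y"
  define S where "S = (\<Sum>k\<in>?I. sigma2_B d (x ! k) (y ! k))"
  define M where "M = (\<Sum>k\<in>?I. ind d (x ! k) (y ! k))"
  have SX: "(\<Sum>k\<in>?I. mu_X d (x ! k) (y ! k)) = S + 8 * M"
    unfolding S_def M_def by (simp add: term_facts[OF assms] sum.distrib sum_distrib_left)
  have SB: "(\<Sum>k\<in>?I. mu_B d (x ! k) (y ! k)) = S + 2 * M"
    unfolding S_def M_def by (simp add: term_facts[OF assms] sum.distrib sum_distrib_left)
  have M0: "0 \<le> M" unfolding M_def by (intro sum_nonneg) (simp add: term_facts[OF assms])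
  have MS: "M \<le> S" unfolding M_def S_def by (intro sum_mono) (simp add: term_facts[OF assms])
  have aB: "a_B d x y = (S + 2 * M) / sqrt S" unfolding a_B_def SB S_def by simp
  have aX: "a_X d x y = sqrt (S + 8 * M)" unfolding aX_eq SX by simp
  show ?thesis
  proof (cases "S = 0")
    case True then show ?thesis using aB aX M0 by simp
  next
    case False
    hence Sp: "S > 0" using M0 MS by linarith
    have "M * M \<le> M * S" using M0 MS by (simp add: mult_left_mono)
    hence "(S + 2 * M)^2 \<le> S * (S + 8 * M)" by (simp add: power2_eq_square algebra_simps)
    hence "S + 2 * M \<le> sqrt (S * (S + 8 * M))" by (rule real_le_rsqrt)
    hence "S + 2 * M \<le> sqrt S * sqrt (S + 8 * M)" by (simp add: real_sqrt_mult)
    hence "(S + 2 * M) / sqrt S \<le> sqrt (S + 8 * M)" using Sp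
      by (simp add: divide_le_eq mult.commute)
    thus ?thesis using aB aX by simp
  qed
qed

lemma aB_ge:
  assumes "d > 0" "0 < (\<Sum>k\<in>diff_idx x y. sigma2_B d (x ! k) (y ! k))"
  shows "sqrt (\<Sum>k\<in>diff_idx x y. sigma2_B d (x ! k) (y ! k)) \<le> a_B d x y"
proof -
  let ?I = "diff_idx x y"
  define S where "S = (\<Sum>k\<in>?I. sigma2_B d (x ! k) (y ! k))"
  have "S \<le> (\<Sum>k\<in>?I. mu_B d (x ! k) (y ! k))"
    unfolding S_def by (intro sum_mono) (simp add: term_facts[OF assms(1)])
  moreover have "S > 0" using assms(2) S_def by simp
  ultimately have "S / sqrt S \<le> (\<Sum>k\<in>?I. mu_B d (x ! k) (y ! k)) / sqrt S"
    by (simp add: divide_right_mono)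
  moreover have "S / sqrt S = sqrt S" using \<open>S > 0\<close> by (simp add: real_div_sqrt)
  ultimately show ?thesis unfolding a_B_def S_def by simp
qed

lemma sum_diff_all:
  assumes "length x = length y" "\<And>u. f u u = 0"
  shows "(\<Sum>k\<in>diff_idx x y. f (x ! k) (y ! k)) = (\<Sum>k<length x. f (x ! k) (y ! k))"
  by (rule sum.mono_neutral_left) (auto simp: diff_idx_def assms)


lemma sigma_same: "d > 0 \<Longrightarrow> sigma2_B d u u = 0"
  by (simp add: sigma2_B_def pam_def doubleton_eq_iff)

lemma lab_val:
  assumes "i < 4" "q ! i = bits_val bb" "\<And>j. j < 4 \<Longrightarrow> q ! j = bits_val bb \<Longrightarrow> j = i"
  shows "labeling q d bb = pam d i"
proof -
  have "(THE i. i < 4 \<and> q ! i = bits_val bb) = i"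
    by (rule the_equality) (use assms in blast)+
  thus ?thesis unfolding labeling_def by simp
qed

lemma four_cases: "(j::nat) < 4 \<Longrightarrow> j = 0 \<or> j = 1 \<or> j = 2 \<or> j = 3" by auto

lemma lab1:
  "labeling [0,1,3,2] d (False,False) = pam d 0"
  "labeling [0,1,3,2] d (False,True) = pam d 1"
  "labeling [0,1,3,2] d (True,True) = pam d 2"
  "labeling [0,1,3,2] d (True,False) = pam d 3"
  by (rule lab_val; simp add: bits_val_def; (drule four_cases; auto))+

lemma lab2:
  "labeling [0,2,3,1] d (False,False) = pam d 0"
  "labeling [0,2,3,1] d (True,False) = pam d 1"
  "labeling [0,2,3,1] d (True,True) = pam d 2"
  "labeling [0,2,3,1] d (False,True) = pam d 3"
  by (rule lab_val; simp add: bits_val_def; (drule four_cases; auto))+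

lemma pamv: "pam d 0 = -3*d" "pam d 1 = -d" "pam d 2 = d" "pam d 3 = 3*d" "pam d (Suc 0) = -d"
  by (simp_all add: pam_def)

lemma H1_1: "d > 0 \<Longrightarrow> sigma2_B d (labeling [0,1,3,2] d a) (labeling [0,1,3,2] d c) = wt (xorp a c)"
  apply (cases a; cases c)
  apply (rename_tac a1 a2 c1 c2)
  apply (case_tac a1; case_tac a2; case_tac c1; case_tac c2)
  apply (simp_all only: lab1 xorp_def fst_conv snd_conv simp_thms)
  apply (simp_all add: pamv sigma2_B_def wt_def doubleton_eq_iff power_mult_distrib)
  done

lemma H1_2: "d > 0 \<Longrightarrow> sigma2_B d (labeling [0,2,3,1] d a) (labeling [0,2,3,1] d c) = wt (xorp a c)"
  apply (cases a; cases c)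
  apply (rename_tac a1 a2 c1 c2)
  apply (case_tac a1; case_tac a2; case_tac c1; case_tac c2)
  apply (simp_all only: lab2 xorp_def fst_conv snd_conv simp_thms)
  apply (simp_all add: pamv sigma2_B_def wt_def doubleton_eq_iff power_mult_distrib)
  done

lemma H2_1: "d > 0 \<Longrightarrow> snd h \<Longrightarrow> mu_X d (labeling [0,1,3,2] d h) (labeling [0,1,3,2] d (xorp h (xorp a c))) = wt (xorp a c)"
  apply (cases a; cases c; cases h)
  apply (rename_tac a1 a2 c1 c2 h1 h2)
  apply (case_tac a1; case_tac a2; case_tac c1; case_tac c2; case_tac h1; case_tac h2)
  apply (simp_all only: lab1 xorp_def fst_conv snd_conv simp_thms)
  apply (simp_all add: pamv mu_X_def wt_def power_mult_distrib)
  done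

lemma H2_2: "d > 0 \<Longrightarrow> fst h \<Longrightarrow> mu_X d (labeling [0,2,3,1] d h) (labeling [0,2,3,1] d (xorp h (xorp a c))) = wt (xorp a c)"
  apply (cases a; cases c; cases h)
  apply (rename_tac a1 a2 c1 c2 h1 h2)
  apply (case_tac a1; case_tac a2; case_tac c1; case_tac c2; case_tac h1; case_tac h2)
  apply (simp_all only: lab2 xorp_def fst_conv snd_conv simp_thms)
  apply (simp_all add: pamv mu_X_def wt_def power_mult_distrib)
  done

lemma xor_nth: "k < length b \<Longrightarrow> k < length c \<Longrightarrow> xor_word b c ! k = xorp (b ! k) (c ! k)"
  by (simp add: xor_word_def xorp_def split: prod.splits)

lemma xor_len: "length (xor_word b c) = min (length b) (length c)"
  by (simp add: xor_word_def)

lemma wt_nonneg: "0 \<le> wt e" by (simp add: wt_def)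

lemma wt_pos: "a \<noteq> c \<Longrightarrow> 0 < wt (xorp a c)"
  by (cases a; cases c) (auto simp: wt_def xorp_def)

lemma finite_pairs:
  assumes "finite X"
  shows "finite {f x y |x y. x \<in> X \<and> y \<in> X \<and> x \<noteq> y}"
proof -
  have "{f x y |x y. x \<in> X \<and> y \<in> X \<and> x \<noteq> y} \<subseteq> (\<lambda>(x, y). f x y) ` (X \<times> X)"
    by auto
  thus ?thesis using assms by (meson finite_SigmaI finite_imageI finite_subset)
qed

lemma generic:
  fixes L :: "bool \<times> bool \<Rightarrow> real" and P :: "bool \<times> bool \<Rightarrow> bool"
  assumes d: "d > 0" and code: "binary_linear_code N B" and ex: "\<exists>b\<in>B. \<exists>c\<in>B. b \<noteq> c"
    and gB: "g \<in> B" and gP: "\<forall>k<N. P (g ! k)"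
    and H1: "\<And>a c. sigma2_B d (L a) (L c) = wt (xorp a c)"
    and H2: "\<And>a c h. P h \<Longrightarrow> mu_X d (L h) (L (xorp h (xorp a c))) = wt (xorp a c)"
  defines "X \<equiv> map L ` B"
  shows "Min {a_X d x y |x y. x \<in> X \<and> y \<in> X \<and> x \<noteq> y}
       = Min {a_B d x y |x y. x \<in> X \<and> y \<in> X \<and> x \<noteq> y}
       \<and> Min {a_X d x y |x y. x \<in> X \<and> y \<in> X \<and> x \<noteq> y} > 0"
proof -
  have Bsub: "B \<subseteq> {b. length b = N}" and Bxor: "\<And>b c. b \<in> B \<Longrightarrow> c \<in> B \<Longrightarrow> xor_word b c \<in> B"
    using code unfolding binary_linear_code_def by auto
  have lenB: "b \<in> B \<Longrightarrow> length b = N" for b using Bsub by auto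
  have finB: "finite B"
    by (rule finite_subset[OF _ finite_lists_length_eq[of UNIV N]]) (use Bsub in auto)
  hence finX: "finite X" unfolding X_def by simp
  define W where "W b c = (\<Sum>k<N. wt (xorp (b ! k) (c ! k)))" for b c
  have Wpos: "0 < W b c" if wb: "b \<in> B" "c \<in> B" "b \<noteq> c" for b c
  proof -
    obtain k where k: "k < N" "b ! k \<noteq> c ! k"
      using wb lenB nth_equalityI by metis
    show ?thesis unfolding W_def
      by (rule sum_pos2[of _ k]) (use k wt_pos wt_nonneg in auto)
  qed
  have K: "\<exists>x'\<in>X. \<exists>y'\<in>X. x' \<noteq> y' \<and> a_X d x' y' = sqrt (W b c)"
    if b: "b \<in> B" and c: "c \<in> B" and bc: "b \<noteq> c" for b c
  proof -
    define e where "e = xor_word b c"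
    define g' where "g' = xor_word g e"
    have eB: "e \<in> B" unfolding e_def using Bxor b c by auto
    have g'B: "g' \<in> B" unfolding g'_def using Bxor gB eB by auto
    have lg: "length g = N" "length g' = N" using lenB gB g'B by auto
    have g'k: "g' ! k = xorp (g ! k) (xorp (b ! k) (c ! k))" if "k < N" for k
      using that lenB b c gB unfolding g'_def e_def by (simp add: xor_nth xor_len)
    have "(\<Sum>k\<in>diff_idx (map L g) (map L g'). mu_X d (map L g ! k) (map L g' ! k))
        = (\<Sum>k<N. mu_X d (map L g ! k) (map L g' ! k))"
      using sum_diff_all[of "map L g" "map L g'" "mu_X d"] lg by (simp add: mu_X_def)
    also have "\<dots> = W b c" unfolding W_def
      by (rule sum.cong) (use lg g'k H2 gP in auto)
    finally have S: "a_X d (map L g) (map L g') = sqrt (W b c)" by (simp add: aX_eq)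
    have "map L g \<noteq> map L g'"
    proof
      assume "map L g = map L g'"
      hence "a_X d (map L g) (map L g') = 0" by (simp add: a_X_def diff_idx_def)
      thus False using S Wpos[OF b c bc] by simp
    qed
    thus ?thesis using S gB g'B unfolding X_def by blast
  qed
  have aBge: "sqrt (W b c) \<le> a_B d (map L b) (map L c)"
    if b: "b \<in> B" and c: "c \<in> B" and bc: "b \<noteq> c" for b c
  proof -
    have lb: "length b = N" "length c = N" using lenB b c by auto
    have "(\<Sum>k\<in>diff_idx (map L b) (map L c). sigma2_B d (map L b ! k) (map L c ! k)) = W b c"
      using sum_diff_all[of "map L b" "map L c" "sigma2_B d"] lb sigma_same[OF d]
      by (simp add: W_def H1)
    thus ?thesis using aB_ge[OF d, of "map L b" "map L c"] Wpos[OF b c bc] by simp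
  qed
  let ?A = "{a_X d x y |x y. x \<in> X \<and> y \<in> X \<and> x \<noteq> y}"
  let ?B = "{a_B d x y |x y. x \<in> X \<and> y \<in> X \<and> x \<noteq> y}"
  have fA: "finite ?A" and fB: "finite ?B" using finite_pairs[OF finX] by auto
  obtain b0 c0 where b0: "b0 \<in> B" "c0 \<in> B" "b0 \<noteq> c0" using ex by blast
  from K[OF b0] have neA: "?A \<noteq> {}" by blast
  from neA have neB: "?B \<noteq> {}" by blast
  have 1: "Min ?A \<le> Min ?B"
  proof -
    have "Min ?B \<in> ?B" using fB neB by (rule Min_in)
    then obtain x y where xy: "x \<in> X" "y \<in> X" "x \<noteq> y" "Min ?B = a_B d x y" by blast
    then obtain b c where bc: "b \<in> B" "c \<in> B" "x = map L b" "y = map L c"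
      unfolding X_def by blast
    with xy have "b \<noteq> c" by auto
    from K[OF bc(1,2) this] obtain x' y' where "x' \<in> X" "y' \<in> X" "x' \<noteq> y'"
      "a_X d x' y' = sqrt (W b c)" by blast
    hence "Min ?A \<le> sqrt (W b c)" using fA by (metis (mono_tags, lifting) Min_le mem_Collect_eq)
    also have "\<dots> \<le> Min ?B" using aBge[OF bc(1,2) \<open>b \<noteq> c\<close>] xy bc by simp
    finally show ?thesis .
  qed
  have 2: "Min ?B \<le> Min ?A"
  proof -
    have "Min ?A \<in> ?A" using fA neA by (rule Min_in)
    then obtain x y where xy: "x \<in> X" "y \<in> X" "x \<noteq> y" "Min ?A = a_X d x y" by blast
    hence "Min ?B \<le> a_B d x y" using fB by (metis (mono_tags, lifting) Min_le mem_Collect_eq)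
    also have "\<dots> \<le> a_X d x y" by (rule aB_le_aX[OF d])
    finally show ?thesis using xy by simp
  qed
  have 3: "Min ?B > 0"
  proof -
    have "Min ?B \<in> ?B" using fB neB by (rule Min_in)
    then obtain x y where xy: "x \<in> X" "y \<in> X" "x \<noteq> y" "Min ?B = a_B d x y" by blast
    then obtain b c where bc: "b \<in> B" "c \<in> B" "x = map L b" "y = map L c"
      unfolding X_def by blast
    with xy have "b \<noteq> c" by auto
    have "0 < sqrt (W b c)" using Wpos[OF bc(1,2) \<open>b \<noteq> c\<close>] by simp
    also have "\<dots> \<le> Min ?B" using aBge[OF bc(1,2) \<open>b \<noteq> c\<close>] xy bc by simp
    finally show ?thesis .
  qed
  show ?thesis using 1 2 3 by linarith
qed

theorem theorem3:
  fixes d :: real and N :: nat and B :: "(bool \<times> bool) list set"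
  assumes "d > 0"
    and "binary_linear_code N B"
    and "\<exists>b\<in>B. \<exists>c\<in>B. b \<noteq> c"
  shows "((\<exists>b\<in>B. \<forall>k<N. snd (b ! k)) \<longrightarrow> asym_loss d [0, 1, 3, 2] B = 0)
       \<and> ((\<exists>b\<in>B. \<forall>k<N. fst (b ! k)) \<longrightarrow> asym_loss d [0, 2, 3, 1] B = 0)"
proof (intro conjI impI)
  assume "\<exists>b\<in>B. \<forall>k<N. snd (b ! k)"
  then obtain g where "g \<in> B" "\<forall>k<N. snd (g ! k)" by blast
  from generic[OF assms this, of "labeling [0,1,3,2] d"] H1_1[OF assms(1)] H2_1[OF assms(1)]
  show "asym_loss d [0, 1, 3, 2] B = 0"
    unfolding asym_loss_def cm_code_def Let_def by simp
next
  assume "\<exists>b\<in>B. \<forall>k<N. fst (b ! k)"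
  then obtain g where "g \<in> B" "\<forall>k<N. fst (g ! k)" by blast
  from generic[OF assms this, of "labeling [0,2,3,1] d"] H1_2[OF assms(1)] H2_2[OF assms(1)]
  show "asym_loss d [0, 2, 3, 1] B = 0"
    unfolding asym_loss_def cm_code_def Let_def by simp
qed

end
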